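(* Let $u,v\in(0,1)$. (1) For any $s\le2$ with $s\ne1$, $$K_s^+(u,v)\ge K_2^+(u,v)\Big[1-(1-v)\Big(1-\big(\tfrac vu\big)^{2-s}\Big)\Big].$$ (2) For $s=1$, $K_1^+(u,v)\ge K_2^+(u,v)\cdot\frac vu$.
   Context: For $s\in\mathbb{R}$, $\phi_s(x)=x\log x-x+1$ if $s=1$; $\phi_s(x)=\frac{1-s+sx-x^s}{s(1-s)}$ if $s\ne0,1$; $\phi_s(x)=-\log x+x-1$ if $s=0$. $K_s(u,v)=v\,\phi_s(u/v)+(1-v)\,\phi_s\big(\frac{1-u}{1-v}\big)$ (the $\phi_s$-divergence between $\mathrm{Ber}(u)$ and $\mathrm{Ber}(v)$), and $K_s^+(u,v)=K_s(u,v)$ if $0<v<u<1$, $K_s^+(u,v)=0$ otherwise. In particular $K_2(u,v)=\frac{(u-v)^2}{2v(1-v)}$. *)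

theory Defs
  imports Complex_Main
begin

definition phi :: "real \<Rightarrow> real \<Rightarrow> real" where
  "phi s x = (if s = 1 then x * ln x - x + 1
              else if s = 0 then - ln x + x - 1
              else (1 - s + s * x - x powr s) / (s * (1 - s)))"

definition K :: "real \<Rightarrow> real \<Rightarrow> real \<Rightarrow> real" where
  "K s u v = v * phi s (u / v) + (1 - v) * phi s ((1 - u) / (1 - v))"

definition Kplus :: "real \<Rightarrow> real \<Rightarrow> real \<Rightarrow> real" where
  "Kplus s u v = (if 0 < v \<and> v < u \<and> u < 1 then K s u v else 0)"

end

theory Submission imports Defs begin


definition dphi :: "real \<Rightarrow> real \<Rightarrow> real" where
  "dphi s x = (if s = 1 then ln x else (1 - x powr (s - 1)) / (1 - s))"

lemma phi_deriv:
  assumes x: "x > 0"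
  shows "(phi s has_real_derivative dphi s x) (at x)"
proof -
  consider "s = 1" | "s = 0" | "s \<noteq> 0" "s \<noteq> 1" by blast
  then show ?thesis
  proof cases
    case 1
    have "phi s = (\<lambda>x. x * ln x - x + 1)" using 1 by (auto simp: phi_def fun_eq_iff)
    moreover have "((\<lambda>x. x * ln x - x + 1) has_real_derivative dphi s x) (at x)"
      using 1 x by (auto intro!: derivative_eq_intros simp: dphi_def)
    ultimately show ?thesis by simp
  next
    case 2
    have "phi s = (\<lambda>x. - ln x + x - 1)" using 2 by (auto simp: phi_def fun_eq_iff)
    moreover have "((\<lambda>x. - ln x + x - 1) has_real_derivative dphi s x) (at x)"
      using 2 x by (auto intro!: derivative_eq_intros simp: dphi_def powr_minus_divide field_simps)
    ultimately show ?thesis by simp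
  next
    case 3
    have "phi s = (\<lambda>x. (1 - s + s * x - x powr s) / (s * (1 - s)))" using 3 by (auto simp: phi_def fun_eq_iff)
    moreover have "((\<lambda>x. (1 - s + s * x - x powr s) / (s * (1 - s))) has_real_derivative dphi s x) (at x)"
      using 3 x apply (auto intro!: derivative_eq_intros simp: dphi_def)
      apply (simp add: divide_simps)
      apply (simp add: algebra_simps power2_eq_square)
      done
    ultimately show ?thesis by simp
  qed
qed

lemma dphi_deriv:
  assumes x: "x > 0"
  shows "(dphi s has_real_derivative x powr (s - 2)) (at x)"
proof (cases "s = 1")
  case True
  have "dphi s = ln" using True by (auto simp: dphi_def fun_eq_iff)
  moreover have "(ln has_real_derivative x powr (s - 2)) (at x)"
    using True x by (auto intro!: derivative_eq_intros simp: powr_minus_divide)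
  ultimately show ?thesis by simp
next
  case False
  have "dphi s = (\<lambda>x. (1 - x powr (s - 1)) / (1 - s))" using False by (auto simp: dphi_def fun_eq_iff)
  moreover have "((\<lambda>x. (1 - x powr (s - 1)) / (1 - s)) has_real_derivative x powr (s - 2)) (at x)"
    using False x apply (auto intro!: derivative_eq_intros)
    apply (simp add: divide_simps)
    apply (simp add: algebra_simps power2_eq_square)
    done
  ultimately show ?thesis by simp
qed

lemma phi_1: "phi s 1 = 0" by (simp add: phi_def)
lemma dphi_1: "dphi s 1 = 0" by (simp add: dphi_def)


lemma phi_chain:
  assumes "(f has_real_derivative f') (at x)" "f x > 0"
  shows "((\<lambda>x. phi s (f x)) has_real_derivative dphi s (f x) * f') (at x)"
  using DERIV_chain2[OF phi_deriv[OF assms(2)] assms(1)] .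

lemma dphi_chain:
  assumes "(f has_real_derivative f') (at x)" "f x > 0"
  shows "((\<lambda>x. dphi s (f x)) has_real_derivative (f x) powr (s - 2) * f') (at x)"
  using DERIV_chain2[OF dphi_deriv[OF assms(2)] assms(1)] .

lemma main:
  assumes v: "0 < v" and vu: "v < u" and u: "u < 1" and s: "s \<le> 2"
  shows "K s u v \<ge> (u - v)^2 / 2 * ((v / u) powr (2 - s) / v + 1 / (1 - v))"
proof -
  define c where "c = (v / u) powr (2 - s) / v + 1 / (1 - v)"
  define g where "g w = K s w v - c * (w - v)^2 / 2" for w
  define g' where "g' w = dphi s (w / v) - dphi s ((1 - w) / (1 - v)) - c * (w - v)" for w
  define g'' where "g'' w = (w / v) powr (s - 2) / v + ((1 - w) / (1 - v)) powr (s - 2) / (1 - v) - c" for w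
  have dg: "(g has_real_derivative g' w) (at w)" if "v \<le> w" "w \<le> u" for w
  proof -
    have p1: "w / v > 0" "(1 - w) / (1 - v) > 0" using that v vu u by auto
    have "((\<lambda>w. phi s (w / v)) has_real_derivative dphi s (w / v) * (1 / v)) (at w)"
      by (rule phi_chain) (use v in \<open>auto intro!: derivative_eq_intros simp: p1\<close>)
    moreover have "((\<lambda>w. phi s ((1 - w) / (1 - v))) has_real_derivative dphi s ((1 - w) / (1 - v)) * (- 1 / (1 - v))) (at w)"
      by (rule phi_chain) (use v vu u that in \<open>auto intro!: derivative_eq_intros simp: p1 divide_simps\<close>)
    ultimately have "(g has_real_derivative v * (dphi s (w / v) * (1 / v)) + (1 - v) * (dphi s ((1 - w) / (1 - v)) * (- 1 / (1 - v))) - c * (2 * (w - v)) / 2) (at w)"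
      unfolding g_def K_def by (auto intro!: derivative_eq_intros)
    moreover have "v * (dphi s (w / v) * (1 / v)) + (1 - v) * (dphi s ((1 - w) / (1 - v)) * (- 1 / (1 - v))) - c * (2 * (w - v)) / 2 = g' w"
      unfolding g'_def using v u vu by (simp add: divide_simps)
    ultimately show ?thesis by simp
  qed
  have dg': "(g' has_real_derivative g'' w) (at w)" if "v \<le> w" "w \<le> u" for w
  proof -
    have p1: "w / v > 0" "(1 - w) / (1 - v) > 0" using that v vu u by auto
    have "((\<lambda>w. dphi s (w / v)) has_real_derivative (w / v) powr (s - 2) * (1 / v)) (at w)"
      by (rule dphi_chain) (use v in \<open>auto intro!: derivative_eq_intros simp: p1\<close>)
    moreover have "((\<lambda>w. dphi s ((1 - w) / (1 - v))) has_real_derivative ((1 - w) / (1 - v)) powr (s - 2) * (- 1 / (1 - v))) (at w)"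
      by (rule dphi_chain) (use v vu u that in \<open>auto intro!: derivative_eq_intros simp: p1 divide_simps\<close>)
    ultimately have "(g' has_real_derivative (w / v) powr (s - 2) * (1 / v) - ((1 - w) / (1 - v)) powr (s - 2) * (- 1 / (1 - v)) - c * 1) (at w)"
      unfolding g'_def by (auto intro!: derivative_eq_intros)
    moreover have "(w / v) powr (s - 2) * (1 / v) - ((1 - w) / (1 - v)) powr (s - 2) * (- 1 / (1 - v)) - c * 1 = g'' w"
      unfolding g''_def by simp
    ultimately show ?thesis by simp
  qed
  have g''pos: "g'' w \<ge> 0" if "v \<le> w" "w \<le> u" for w
  proof -
    have a: "(w / v) powr (s - 2) \<ge> (u / v) powr (s - 2)"
      by (rule powr_mono2') (use that v s in \<open>auto simp: divide_simps\<close>)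
    have b: "(u / v) powr (s - 2) = (v / u) powr (2 - s)"
    proof -
      have "(u / v) powr (s - 2) = (u / v) powr (- (2 - s))" by simp
      also have "\<dots> = 1 / ((u / v) powr (2 - s))" by (rule powr_minus_divide)
      also have "\<dots> = (v / u) powr (2 - s)" using v vu by (simp add: powr_divide)
      finally show ?thesis .
    qed
    have c1: "((1 - w) / (1 - v)) powr (s - 2) \<ge> 1 powr (s - 2)"
      by (rule powr_mono2') (use that v vu u s in \<open>auto simp: divide_simps\<close>)
    have "(w / v) powr (s - 2) / v \<ge> (v / u) powr (2 - s) / v"
      using a b v by (simp add: divide_right_mono)
    moreover have "((1 - w) / (1 - v)) powr (s - 2) / (1 - v) \<ge> 1 / (1 - v)"
      using c1 u vu by (simp add: divide_right_mono)
    ultimately show ?thesis unfolding g''_def c_def by linarith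
  qed
  have g'pos: "g' w \<ge> 0" if "v \<le> w" "w \<le> u" for w
  proof -
    have "g' v \<le> g' w"
      by (rule DERIV_nonneg_imp_nondecreasing[OF that(1)])
         (use that dg' g''pos in \<open>meson order_trans\<close>)
    moreover have "g' v = 0" unfolding g'_def using v u vu by (simp add: dphi_def)
    ultimately show ?thesis by simp
  qed
  have "g v \<le> g u"
    by (rule DERIV_nonneg_imp_nondecreasing[of v u g]) (use vu dg g'pos in \<open>meson less_imp_le\<close>)+
  moreover have "g v = 0" unfolding g_def K_def using v u vu by (simp add: phi_def)
  ultimately show ?thesis unfolding g_def c_def by (simp add: mult.commute)
qed

lemma K2: "0 < v \<Longrightarrow> v < 1 \<Longrightarrow> 0 < u \<Longrightarrow> u < 1 \<Longrightarrow> K 2 u v = (u - v)^2 / 2 * (1 / v + 1 / (1 - v))"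
  unfolding K_def phi_def apply (simp add: powr_numeral)
  apply (simp add: divide_simps)
  apply (simp add: algebra_simps power2_eq_square)
  done

theorem lemmaA11:
  fixes u v :: real
  assumes "0 < u" "u < 1" "0 < v" "v < 1"
  shows "(\<forall>s::real. s \<le> 2 \<and> s \<noteq> 1 \<longrightarrow>
            Kplus s u v \<ge> Kplus 2 u v * (1 - (1 - v) * (1 - (v / u) powr (2 - s))))
       \<and> Kplus 1 u v \<ge> Kplus 2 u v * (v / u)"
proof (cases "v < u")
  case False
  then show ?thesis by (simp add: Kplus_def)
next
  case True
  have key: "Kplus 2 u v * (1 - (1 - v) * (1 - (v / u) powr (2 - s))) \<le> Kplus s u v" if s: "s \<le> 2" for s
  proof -
    have "Kplus 2 u v * (1 - (1 - v) * (1 - (v / u) powr (2 - s)))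
        = (u - v)^2 / 2 * ((v / u) powr (2 - s) / v + 1 / (1 - v))"
      using True assms by (simp add: Kplus_def K2 divide_simps) (simp add: algebra_simps)
    also have "\<dots> \<le> K s u v" by (rule main) (use True assms s in auto)
    finally show ?thesis using True assms by (simp add: Kplus_def)
  qed
  have "(v / u) powr (2 - 1) = v / u" using assms by simp
  moreover have "Kplus 2 u v \<ge> 0" using True assms by (simp add: Kplus_def K2)
  moreover have "v / u \<le> 1 - (1 - v) * (1 - v / u)"
  proof -
    have "1 - (1 - v) * (1 - v / u) - v / u = v * (1 - v / u)" by (simp add: algebra_simps add_divide_distrib[symmetric])
    moreover have "v * (1 - v / u) \<ge> 0" using True assms by simp
    ultimately show ?thesis by linarith
  qed
  ultimately have "Kplus 2 u v * (v / u) \<le> Kplus 1 u v"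
    using key[of 1] by (smt (verit) mult_left_mono)
  then show ?thesis using key by auto
qed



end
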